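(* Let $\mathcal R$ be a commutative ring with identity, $\mathcal M,\mathcal N$ modules over $\mathcal R$, $s\in\mathbb N$, $Y\in\mathcal M^{s\times s}$, and $f:\mathrm{Nilp}(\mathcal M,Y)\to\mathcal N_{\mathrm{nc}}$ a nc function. Assume that there are $\ell$-linear mappings $f_\ell:(\mathcal M^{s\times s})^\ell\to\mathcal N^{s\times s}$, $\ell=0,1,\dots$, such that $$f(X)=\sum_{\ell=0}^\infty\Bigl(X-\bigoplus_{\alpha=1}^mY\Bigr)^{\odot_s\ell}f_\ell$$ for all $m\in\mathbb N$ and all $X\in\mathrm{Nilp}(\mathcal M,Y)\cap\mathcal M^{sm\times sm}$ (the sum having finitely many nonzero terms). Then $f_\ell=\Delta_R^\ell f(Y,\dots,Y)$ ($\ell+1$ arguments) for all $\ell$.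
   Context: $\mathcal M_{\mathrm{nc}}=\coprod_{n\ge1}\mathcal M^{n\times n}$; matrices over $\mathcal R$ act on matrices over $\mathcal M,\mathcal N$ by matrix multiplication; $X\oplus Y=\begin{bmatrix}X&0\\0&Y\end{bmatrix}$. A nc set is a subset closed under direct sums; $\Omega_n=\Omega\cap\mathcal M^{n\times n}$. A nc function $f:\Omega\to\mathcal N_{\mathrm{nc}}$ satisfies $f(\Omega_n)\subseteq\mathcal N^{n\times n}$, $f(X\oplus Y)=f(X)\oplus f(Y)$, $f(SXS^{-1})=Sf(X)S^{-1}$ whenever $S\in\mathcal R^{n\times n}$ invertible and $X,SXS^{-1}\in\Omega_n$. For $W\in\mathcal M^{sm\times sm}$ viewed as an $m\times m$ matrix $[W_{ij}]$ with blocks in $\mathcal M^{s\times s}$, $W^{\odot_s\ell}$ is the $m\times m$ matrix over $(\mathcal M^{s\times s})^{\otimes\ell}$ with $(i,k)$ entry $\sum_{j_1,\dots,j_{\ell-1}}W_{ij_1}\otimes\cdots\otimes W_{j_{\ell-1}k}$; for an $\ell$-linear $\varphi:(\mathcal M^{s\times s})^\ell\to\mathcal N^{s\times s}$, $W^{\odot_s\ell}\varphi\in\mathcal N^{sm\times sm}$ applies $\varphi$ (as a linear map on the tensor power) entrywise; for $\ell=0$, $W^{\odot_s0}\varphi=\bigoplus_{\alpha=1}^m\varphi$. $\mathrm{Nilp}(\mathcal M,Y)=\coprod_m\{X\in\mathcal M^{sm\times sm}:(X-\bigoplus_{\alpha=1}^mY)^{\odot_s\ell}=0\text{ for some }\ell\}$;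 it is a right admissible nc set (for all $X\in\Omega_n,X'\in\Omega_{n'},Z\in\mathcal M^{n\times n'}$ some invertible $r$ gives $\begin{bmatrix}X&rZ\\0&X'\end{bmatrix}\in\Omega$). Higher order operators: $f$ extends uniquely to a nc function $\tilde f$ on $\tilde\Omega=\{SXS^{-1}\}$ via $\tilde f(SXS^{-1})=Sf(X)S^{-1}$; for right admissible $\Omega$, $X^j\in\Omega_{n_j}$, $Z^j\in\mathcal M^{n_{j-1}\times n_j}$, the block upper bidiagonal matrix $B$ with diagonal $X^0,\dots,X^\ell$ and superdiagonal $Z^1,\dots,Z^\ell$ lies in $\tilde\Omega$ and $\Delta_R^\ell f(X^0,\dots,X^\ell)(Z^1,\dots,Z^\ell)$ is the $(1,\ell+1)$ block of $\tilde f(B)$; it is multilinear, and $\Delta_R^0f=f$. *)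

theory Defs
  imports Complex_Main
begin

text \<open>Matrices over a type are represented as functions nat => nat => 'a;
  an n x n matrix is one that vanishes outside the index range below n.
  An element of M_nc is a pair (n, X) with n >= 1 and X an n x n matrix.\<close>

type_synonym 'a mat = "nat \<Rightarrow> nat \<Rightarrow> 'a"

definition mat_ok :: "nat \<Rightarrow> 'a::zero mat \<Rightarrow> bool" where
  "mat_ok n X \<longleftrightarrow> (\<forall>i j. (n \<le> i \<or> n \<le> j) \<longrightarrow> X i j = 0)"

definition madd :: "'a::plus mat \<Rightarrow> 'a mat \<Rightarrow> 'a mat" where
  "madd A B = (\<lambda>i j. A i j + B i j)"

definition msub :: "'a::minus mat \<Rightarrow> 'a mat \<Rightarrow> 'a mat" where
  "msub A B = (\<lambda>i j. A i j - B i j)"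

definition msc :: "('r \<Rightarrow> 'a \<Rightarrow> 'a) \<Rightarrow> 'r \<Rightarrow> 'a mat \<Rightarrow> 'a mat" where
  "msc sc c A = (\<lambda>i j. sc c (A i j))"

definition dsum :: "nat \<Rightarrow> 'a::zero mat \<Rightarrow> nat \<Rightarrow> 'a mat \<Rightarrow> 'a mat" where
  "dsum n X n' X' = (\<lambda>i j. if i < n \<and> j < n then X i j
      else if n \<le> i \<and> n \<le> j \<and> i < n + n' \<and> j < n + n' then X' (i - n) (j - n) else 0)"

definition blkdiag :: "nat \<Rightarrow> nat \<Rightarrow> 'a::zero mat \<Rightarrow> 'a mat" where
  "blkdiag s m Y = (\<lambda>p q. if p < s * m \<and> q < s * m \<and> p div s = q div s
      then Y (p mod s) (q mod s) else 0)"

definition blk :: "nat \<Rightarrow> 'a::zero mat \<Rightarrow> nat \<Rightarrow> nat \<Rightarrow> 'a mat" where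
  "blk s W i j = (\<lambda>a b. if a < s \<and> b < s then W (i * s + a) (j * s + b) else 0)"

definition chain :: "nat \<Rightarrow> 'a::zero mat \<Rightarrow> nat \<Rightarrow> nat list \<Rightarrow> nat \<Rightarrow> 'a mat list" where
  "chain s W i js k = map2 (blk s W) (i # js) (js @ [k])"

definition seqs :: "nat \<Rightarrow> nat \<Rightarrow> nat list set" where
  "seqs m n = {js. length js = n \<and> set js \<subseteq> {..<m}}"

text \<open>(W^{odot_s l} phi): the sm x sm matrix whose (i,k) block is
  sum over j1..j(l-1) of phi(W_{i j1}, ..., W_{j(l-1) k}); for l = 0 it is
  the block diagonal matrix with m copies of phi [].  An l-linear map is
  represented as a function on lists of length l.\<close>
definition odot_apply :: "nat \<Rightarrow> nat \<Rightarrow> 'm::zero mat \<Rightarrow> nat \<Rightarrow> ('m mat list \<Rightarrow> 'n::comm_monoid_add mat) \<Rightarrow> 'n mat" where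
  "odot_apply s m W l \<phi> = (\<lambda>p q. if p < s * m \<and> q < s * m then
      (let i = p div s; a = p mod s; k = q div s; b = q mod s in
        if l = 0 then (if i = k then \<phi> [] a b else 0)
        else (\<Sum>js\<in>seqs m (l - 1). \<phi> (chain s W i js k) a b))
      else 0)"

text \<open>Tensor powers of M^{s x s} over R, realised as the free R-module on lists
  of s x s matrices (finitely supported functions to R) modulo the R-span of the
  multilinearity relations.  An element of the free module is zero in the
  tensor power iff it lies in the span below.\<close>
definition delta :: "'a \<Rightarrow> 'a \<Rightarrow> 'r::zero_neq_one" where
  "delta v = (\<lambda>w. if w = v then 1 else 0)"

inductive_set tz_span :: "('r::comm_ring_1 \<Rightarrow> 'm::ab_group_add \<Rightarrow> 'm) \<Rightarrow> nat \<Rightarrow> ('m mat list \<Rightarrow> 'r) set"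
  for sc :: "'r::comm_ring_1 \<Rightarrow> 'm::ab_group_add \<Rightarrow> 'm" and s :: nat where
  tz_zero: "(\<lambda>_. 0) \<in> tz_span sc s"
| tz_add: "\<lbrakk>t \<in> tz_span sc s; mat_ok s A; mat_ok s B;
     \<forall>x\<in>set xs. mat_ok s x; \<forall>y\<in>set ys. mat_ok s y\<rbrakk> \<Longrightarrow>
     (\<lambda>w. t w + c * (delta (xs @ [madd A B] @ ys) w - delta (xs @ [A] @ ys) w
                       - delta (xs @ [B] @ ys) w)) \<in> tz_span sc s"
| tz_scale: "\<lbrakk>t \<in> tz_span sc s; mat_ok s A;
     \<forall>x\<in>set xs. mat_ok s x; \<forall>y\<in>set ys. mat_ok s y\<rbrakk> \<Longrightarrow>
     (\<lambda>w. t w + c * (delta (xs @ [msc sc d A] @ ys) w - d * delta (xs @ [A] @ ys) w))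
       \<in> tz_span sc s"

text \<open>The (i,k) entry of W^{odot_s l}, an element of the free module.\<close>
definition tpow_elem :: "nat \<Rightarrow> nat \<Rightarrow> 'm::zero mat \<Rightarrow> nat \<Rightarrow> nat \<Rightarrow> nat \<Rightarrow> 'm mat list \<Rightarrow> 'r::comm_ring_1" where
  "tpow_elem s m W l i k = (\<lambda>w. if l = 0 then (if i = k \<and> w = [] then 1 else 0)
      else (\<Sum>js\<in>seqs m (l - 1). delta (chain s W i js k) w))"

definition odot_zero :: "('r::comm_ring_1 \<Rightarrow> 'm::ab_group_add \<Rightarrow> 'm) \<Rightarrow> nat \<Rightarrow> nat \<Rightarrow> 'm mat \<Rightarrow> nat \<Rightarrow> bool" where
  "odot_zero sc s m W l \<longleftrightarrow> (\<forall>i<m. \<forall>k<m. tpow_elem s m W l i k \<in> tz_span sc s)"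

definition Nilp :: "('r::comm_ring_1 \<Rightarrow> 'm::ab_group_add \<Rightarrow> 'm) \<Rightarrow> nat \<Rightarrow> 'm mat \<Rightarrow> (nat \<times> 'm mat) set" where
  "Nilp sc s Y = {(n, X). \<exists>m. 1 \<le> m \<and> n = s * m \<and> mat_ok n X \<and>
      (\<exists>l. odot_zero sc s m (msub X (blkdiag s m Y)) l)}"

definition rmat_mul :: "nat \<Rightarrow> 'r::comm_ring_1 mat \<Rightarrow> 'r mat \<Rightarrow> 'r mat" where
  "rmat_mul n S T = (\<lambda>i k. \<Sum>j<n. S i j * T j k)"

definition ident :: "nat \<Rightarrow> 'r::comm_ring_1 mat" where
  "ident n = (\<lambda>i j. if i = j \<and> i < n then 1 else 0)"

definition inv_pair :: "nat \<Rightarrow> 'r::comm_ring_1 mat \<Rightarrow> 'r mat \<Rightarrow> bool" where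
  "inv_pair n S T \<longleftrightarrow> mat_ok n S \<and> mat_ok n T \<and> rmat_mul n S T = ident n \<and> rmat_mul n T S = ident n"

definition lmul :: "('r \<Rightarrow> 'm \<Rightarrow> 'm::comm_monoid_add) \<Rightarrow> nat \<Rightarrow> 'r mat \<Rightarrow> 'm mat \<Rightarrow> 'm mat" where
  "lmul sc n S X = (\<lambda>i k. \<Sum>j<n. sc (S i j) (X j k))"

definition rmul :: "('r \<Rightarrow> 'm \<Rightarrow> 'm::comm_monoid_add) \<Rightarrow> nat \<Rightarrow> 'm mat \<Rightarrow> 'r mat \<Rightarrow> 'm mat" where
  "rmul sc n X T = (\<lambda>i k. \<Sum>j<n. sc (T j k) (X i j))"

definition nc_fun :: "('r::comm_ring_1 \<Rightarrow> 'm::ab_group_add \<Rightarrow> 'm) \<Rightarrow> ('r \<Rightarrow> 'n::ab_group_add \<Rightarrow> 'n)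
    \<Rightarrow> (nat \<times> 'm mat) set \<Rightarrow> (nat \<times> 'm mat \<Rightarrow> 'n mat) \<Rightarrow> bool" where
  "nc_fun scM scN \<Omega> f \<longleftrightarrow>
     (\<forall>n X. (n, X) \<in> \<Omega> \<longrightarrow> mat_ok n (f (n, X))) \<and>
     (\<forall>n X n' X'. (n, X) \<in> \<Omega> \<longrightarrow> (n', X') \<in> \<Omega> \<longrightarrow>
        f (n + n', dsum n X n' X') = dsum n (f (n, X)) n' (f (n', X'))) \<and>
     (\<forall>n X S T. (n, X) \<in> \<Omega> \<longrightarrow> inv_pair n S T \<longrightarrow>
        (n, rmul scM n (lmul scM n S X) T) \<in> \<Omega> \<longrightarrow>
        f (n, rmul scM n (lmul scM n S X) T) = rmul scN n (lmul scN n S (f (n, X))) T)"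

definition nc_ext :: "('r::comm_ring_1 \<Rightarrow> 'm::ab_group_add \<Rightarrow> 'm) \<Rightarrow> ('r \<Rightarrow> 'n::ab_group_add \<Rightarrow> 'n)
    \<Rightarrow> (nat \<times> 'm mat) set \<Rightarrow> (nat \<times> 'm mat \<Rightarrow> 'n mat) \<Rightarrow> nat \<Rightarrow> 'm mat \<Rightarrow> 'n mat" where
  "nc_ext scM scN \<Omega> f n Z = (THE W. \<exists>S T X. (n, X) \<in> \<Omega> \<and> inv_pair n S T \<and>
      Z = rmul scM n (lmul scM n S X) T \<and> W = rmul scN n (lmul scN n S (f (n, X))) T)"

definition bidiag :: "nat \<Rightarrow> 'a::zero mat list \<Rightarrow> 'a mat list \<Rightarrow> 'a mat" where
  "bidiag s Xs Zs = (\<lambda>p q. if p < s * length Xs \<and> q < s * length Xs then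
      (let i = p div s; j = q div s in
        if i = j then (Xs ! i) (p mod s) (q mod s)
        else if j = Suc i then (Zs ! i) (p mod s) (q mod s) else 0)
      else 0)"

text \<open>Delta_R^l f (X^0,...,X^l)(Z^1,...,Z^l) for s x s arguments:
  the (1, l+1) block of f~ applied to the bidiagonal matrix.\<close>
definition DeltaR :: "('r::comm_ring_1 \<Rightarrow> 'm::ab_group_add \<Rightarrow> 'm) \<Rightarrow> ('r \<Rightarrow> 'n::ab_group_add \<Rightarrow> 'n)
    \<Rightarrow> (nat \<times> 'm mat) set \<Rightarrow> (nat \<times> 'm mat \<Rightarrow> 'n mat) \<Rightarrow> nat \<Rightarrow> 'm mat list \<Rightarrow> 'm mat list \<Rightarrow> 'n mat" where
  "DeltaR scM scN \<Omega> f s Xs Zs =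
     blk s (nc_ext scM scN \<Omega> f (s * length Xs) (bidiag s Xs Zs)) 0 (length Zs)"

definition multilin :: "('r::comm_ring_1 \<Rightarrow> 'm::ab_group_add \<Rightarrow> 'm) \<Rightarrow> ('r \<Rightarrow> 'n::ab_group_add \<Rightarrow> 'n)
    \<Rightarrow> nat \<Rightarrow> nat \<Rightarrow> ('m mat list \<Rightarrow> 'n mat) \<Rightarrow> bool" where
  "multilin scM scN s l \<phi> \<longleftrightarrow>
     (\<forall>xs. length xs = l \<longrightarrow> (\<forall>x\<in>set xs. mat_ok s x) \<longrightarrow> mat_ok s (\<phi> xs)) \<and>
     (\<forall>xs ys A B. length xs + length ys + 1 = l \<longrightarrow> (\<forall>x\<in>set xs. mat_ok s x) \<longrightarrow>
        (\<forall>y\<in>set ys. mat_ok s y) \<longrightarrow> mat_ok s A \<longrightarrow> mat_ok s B \<longrightarrow>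
        \<phi> (xs @ [madd A B] @ ys) = madd (\<phi> (xs @ [A] @ ys)) (\<phi> (xs @ [B] @ ys))) \<and>
     (\<forall>xs ys A c. length xs + length ys + 1 = l \<longrightarrow> (\<forall>x\<in>set xs. mat_ok s x) \<longrightarrow>
        (\<forall>y\<in>set ys. mat_ok s y) \<longrightarrow> mat_ok s A \<longrightarrow>
        \<phi> (xs @ [msc scM c A] @ ys) = msc scN c (\<phi> (xs @ [A] @ ys)))"

end

theory Submission
  imports Defs
begin

lemma tz_add_closed:
  assumes "b \<in> tz_span sc s" "a \<in> tz_span sc s"
  shows "(\<lambda>w. a w + b w) \<in> tz_span sc s"
  using assms
proof (induction b rule: tz_span.induct)
  case tz_zero
  then show ?case by simp
next
  case (tz_add t A B xs ys c)
  have "(\<lambda>w. (a w + t w) + c * (delta (xs @ [madd A B] @ ys) w - delta (xs @ [A] @ ys) w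
                       - delta (xs @ [B] @ ys) w)) \<in> tz_span sc s"
    by (rule tz_span.tz_add) (use tz_add in auto)
  then show ?case by (simp add: add.assoc)
next
  case (tz_scale t A xs ys c d)
  have "(\<lambda>w. (a w + t w) + c * (delta (xs @ [msc sc d A] @ ys) w - d * delta (xs @ [A] @ ys) w))
       \<in> tz_span sc s"
    by (rule tz_span.tz_scale) (use tz_scale in auto)
  then show ?case by (simp add: add.assoc)
qed

lemma tz_sum_closed:
  assumes "\<forall>x\<in>S. g x \<in> tz_span sc s"
  shows "(\<lambda>w. \<Sum>x\<in>S. g x w) \<in> tz_span sc s"
proof (cases "finite S")
  case True
  then show ?thesis using assms
  proof (induction S rule: finite_induct)
    case empty
    then show ?case by (simp add: tz_span.tz_zero)
  next
    case (insert x F)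
    have "(\<lambda>w. g x w + (\<Sum>x\<in>F. g x w)) \<in> tz_span sc s"
      using tz_add_closed[of "\<lambda>w. \<Sum>x\<in>F. g x w" sc s "g x"] insert by auto
    then show ?case using insert by simp
  qed
next
  case False
  then show ?thesis by (simp add: tz_span.tz_zero)
qed

lemma tz_delta_zero:
  assumes "module sc" "\<forall>x\<in>set xs. mat_ok s x" "\<forall>y\<in>set ys. mat_ok s y"
  shows "delta (xs @ [(\<lambda>_ _. 0)] @ ys) \<in> tz_span sc s"
proof -
  have A: "mat_ok s (\<lambda>_ _. (0::'b))" by (simp add: mat_ok_def)
  have "(\<lambda>w. (\<lambda>_. 0) w + 1 * (delta (xs @ [msc sc 0 (\<lambda>_ _. 0)] @ ys) w
          - 0 * delta (xs @ [(\<lambda>_ _. 0)] @ ys) w)) \<in> tz_span sc s"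
    by (rule tz_span.tz_scale[OF tz_span.tz_zero A]) (use assms in auto)
  moreover have "msc sc 0 (\<lambda>_ _. 0) = (\<lambda>_ _. 0)"
    using assms(1) by (simp add: msc_def module.scale_zero_left)
  ultimately show ?thesis by simp
qed

lemma multilin_zero:
  assumes "module scM" "module scN" "multilin scM scN s L \<phi>"
    "length (xs @ [(\<lambda>_ _. 0)] @ ys) = L"
    "\<forall>x\<in>set xs. mat_ok s x" "\<forall>y\<in>set ys. mat_ok s y"
  shows "\<phi> (xs @ [(\<lambda>_ _. 0)] @ ys) = (\<lambda>_ _. 0)"
proof -
  have A: "mat_ok s (\<lambda>_ _. 0)" by (simp add: mat_ok_def)
  have "\<phi> (xs @ [msc scM 0 (\<lambda>_ _. 0)] @ ys) = msc scN 0 (\<phi> (xs @ [(\<lambda>_ _. 0)] @ ys))"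
  proof -
    have "length xs + length ys + 1 = L" using assms(4) by simp
    then show ?thesis
      using assms(3,5,6) A unfolding multilin_def
      by (metis append_Cons append_Nil)
  qed
  moreover have "msc scM 0 (\<lambda>_ _. 0) = (\<lambda>_ _. 0)"
    using assms(1) by (simp add: msc_def module.scale_zero_left)
  moreover have "msc scN 0 X = (\<lambda>_ _. 0)" for X
    using assms(2) by (simp add: msc_def module.scale_zero_left)
  ultimately show ?thesis by simp
qed

lemma chain_path:
  assumes "length js = n" "\<forall>t<Suc n. (js @ [k]) ! t = Suc ((i # js) ! t)"
  shows "(\<forall>t<Suc n. (i # js) ! t = i + t) \<and> k = i + Suc n"
proof -
  have P: "(i # js) ! t = i + t" if "t \<le> n" for t
    using that
  proof (induction t)
    case 0 then show ?case by simp
  next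
    case (Suc t)
    have "(i # js) ! Suc t = js ! t" by simp
    also have "\<dots> = (js @ [k]) ! t" using Suc.prems assms(1) by (simp add: nth_append)
    also have "\<dots> = Suc ((i # js) ! t)" using assms(2) Suc.prems by auto
    finally show ?case using Suc by simp
  qed
  have "k = (js @ [k]) ! n" by (simp add: assms(1)[symmetric])
  also have "\<dots> = Suc ((i # js) ! n)" using assms(2) by auto
  finally show ?thesis using P by auto
qed

lemma divmod_facts:
  fixes s i a :: nat
  assumes "a < s"
  shows "(i * s + a) div s = i" "(i * s + a) mod s = a" "(i * s + a < s * m) = (i < m)"
proof -
  show "(i * s + a) div s = i" using assms by simp
  show "(i * s + a) mod s = a" using assms by simp
  show "(i * s + a < s * m) = (i < m)"
  proof
    assume "i * s + a < s * m"
    then have "i * s < m * s" by (metis mult.commute add_lessD1)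
    then show "i < m" using mult_less_cancel2 by blast
  next
    assume "i < m"
    then have "Suc i * s \<le> m * s" by (intro mult_le_mono1) simp
    then show "i * s + a < s * m" using assms by (simp add: mult.commute)
  qed
qed

lemma blkW:
  fixes Y :: "'a::ab_group_add mat"
  assumes "1 \<le> s" "length Zs = l" "\<forall>Z\<in>set Zs. mat_ok s Z"
  shows "blk s (msub (bidiag s (replicate (Suc l) Y) Zs) (blkdiag s (Suc l) Y)) i j =
     (if j = Suc i \<and> j < Suc l then Zs ! i else (\<lambda>_ _. 0))"
proof (rule ext, rule ext)
  fix a b
  show "blk s (msub (bidiag s (replicate (Suc l) Y) Zs) (blkdiag s (Suc l) Y)) i j a b =
     (if j = Suc i \<and> j < Suc l then Zs ! i else (\<lambda>_ _. 0)) a b"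
  proof (cases "a < s \<and> b < s")
    case True
    define p where "p = i * s + a"
    define q where "q = j * s + b"
    have f: "p div s = i" "p mod s = a" "(p < s * Suc l) = (i < Suc l)"
      using True divmod_facts unfolding p_def by blast+
    have g: "q div s = j" "q mod s = b" "(q < s * Suc l) = (j < Suc l)"
      using True divmod_facts unfolding q_def by blast+
    have e: "blk s W i j a b = W p q" for W :: "'a mat"
      using True by (simp add: blk_def p_def q_def)
    have f3: "(p < s + s * l) = (i < Suc l)" using f(3) by simp
    have g3: "(q < s + s * l) = (j < Suc l)" using g(3) by simp
    have h: "(Y # replicate l Y) ! k = Y" if "k < Suc l" for k
      using that by (simp add: nth_Cons split: nat.split)
    show ?thesis unfolding e
      by (auto simp: msub_def bidiag_def blkdiag_def Let_def f g f3 g3 h assms(2))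
  next
    case False
    have "(Zs ! i) a b = 0" if "i < l"
      using assms(2,3) that False nth_mem[of i Zs] unfolding mat_ok_def by auto
    then show ?thesis using False by (auto simp: blk_def)
  qed
qed

lemma blk_ok: "mat_ok s (blk s W i j)"
  by (simp add: mat_ok_def blk_def)

lemma chain_ok: "\<forall>x\<in>set (chain s W i js k). mat_ok s x"
proof
  fix x assume "x \<in> set (chain s W i js k)"
  then obtain u v where "x = blk s W u v"
    unfolding chain_def by (auto simp: set_zip)
  then show "mat_ok s x" by (simp add: blk_ok)
qed

lemma length_chain: "length (chain s W i js k) = Suc (length js)"
  by (simp add: chain_def)

lemma nth_chain: "t < Suc (length js) \<Longrightarrow>
   chain s W i js k ! t = blk s W ((i # js) ! t) ((js @ [k]) ! t)"
  by (simp add: chain_def del: list.map)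

lemma ident_mul:
  assumes "module sc" "mat_ok n X"
  shows "rmul sc n (lmul sc n (ident n) X) (ident n) = X"
proof -
  have L: "lmul sc n (ident n) X = X"
  proof (rule ext, rule ext)
    fix i k
    show "lmul sc n (ident n) X i k = X i k"
    proof (cases "i < n")
      case True
      have "lmul sc n (ident n) X i k = (\<Sum>j<n. if j = i then X i k else 0)"
        unfolding lmul_def ident_def using assms(1)
        by (intro sum.cong) (auto simp: module.scale_zero_left module.scale_one)
      then show ?thesis using True by simp
    next
      case False
      then have "lmul sc n (ident n) X i k = 0"
        unfolding lmul_def ident_def using assms(1)
        by (auto simp: module.scale_zero_left intro!: sum.neutral)
      then show ?thesis using False assms(2) by (simp add: mat_ok_def)
    qed
  qed
  have R: "rmul sc n X (ident n) = X"
  proof (rule ext, rule ext)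
    fix i k
    show "rmul sc n X (ident n) i k = X i k"
    proof (cases "k < n")
      case True
      have "rmul sc n X (ident n) i k = (\<Sum>j<n. if j = k then X i k else 0)"
        unfolding rmul_def ident_def using assms(1)
        by (intro sum.cong) (auto simp: module.scale_zero_left module.scale_one)
      then show ?thesis using True by simp
    next
      case False
      then have "rmul sc n X (ident n) i k = 0"
        unfolding rmul_def ident_def using assms(1)
        by (auto simp: module.scale_zero_left intro!: sum.neutral)
      then show ?thesis using False assms(2) by (simp add: mat_ok_def)
    qed
  qed
  show ?thesis using L R by simp
qed

lemma inv_ident: "inv_pair n (ident n) (ident (n::nat) :: 'r::comm_ring_1 mat)"
proof -
  have "rmat_mul n (ident n) (ident n) = (ident n :: 'r mat)"
  proof (rule ext, rule ext)
    fix i k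
    have "rmat_mul n (ident n) (ident n) i k = (\<Sum>j<n. if j = i then (ident n i k :: 'r) else 0)"
      unfolding rmat_mul_def by (intro sum.cong) (auto simp: ident_def)
    then show "rmat_mul n (ident n) (ident n) i k = (ident n i k :: 'r)"
      by (simp add: ident_def)
  qed
  then show ?thesis by (simp add: inv_pair_def mat_ok_def ident_def)
qed

theorem theorem5p9:
  fixes scM :: "'r::comm_ring_1 \<Rightarrow> 'm::ab_group_add \<Rightarrow> 'm"
    and scN :: "'r \<Rightarrow> 'n::ab_group_add \<Rightarrow> 'n"
    and s :: nat and Y :: "'m mat"
    and f :: "nat \<times> 'm mat \<Rightarrow> 'n mat"
    and fl :: "nat \<Rightarrow> 'm mat list \<Rightarrow> 'n mat"
  assumes "module scM" and "module scN"
    and "1 \<le> s" and "mat_ok s Y"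
    and "nc_fun scM scN (Nilp scM s Y) f"
    and "\<forall>l. multilin scM scN s l (fl l)"
    and "\<forall>m X. 1 \<le> m \<longrightarrow> (s * m, X) \<in> Nilp scM s Y \<longrightarrow>
           finite {l. odot_apply s m (msub X (blkdiag s m Y)) l (fl l) \<noteq> (\<lambda>_ _. 0)} \<and>
           (\<forall>p q. f (s * m, X) p q =
              (\<Sum>l\<in>{l. odot_apply s m (msub X (blkdiag s m Y)) l (fl l) \<noteq> (\<lambda>_ _. 0)}.
                  odot_apply s m (msub X (blkdiag s m Y)) l (fl l) p q))"
  shows "\<forall>l Zs. length Zs = l \<longrightarrow> (\<forall>Z\<in>set Zs. mat_ok s Z) \<longrightarrow>
           fl l Zs = DeltaR scM scN (Nilp scM s Y) f s (replicate (Suc l) Y) Zs"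
proof (intro allI impI)
  fix l and Zs :: "'m mat list"
  assume len: "length Zs = l" and ok: "\<forall>Z\<in>set Zs. mat_ok s Z"
  note A = assms
  define m where "m = Suc l"
  define B where "B = bidiag s (replicate m Y) Zs"
  define W where "W = msub B (blkdiag s m Y)"
  have BW: "blk s W i j = (if j = Suc i \<and> j < m then Zs ! i else (\<lambda>_ _. 0))" for i j
    unfolding W_def B_def m_def using blkW[OF A(3) len ok] .
  have zp: "(\<lambda>_ _. 0) \<in> set (chain s W i js k) \<or>
      ((\<forall>t<Suc (length js). (js @ [k]) ! t = Suc ((i # js) ! t)) \<and>
       (\<forall>t<Suc (length js). (i # js) ! t = i + t) \<and> k = i + Suc (length js))" for i k js
  proof (cases "\<forall>t<Suc (length js). (js @ [k]) ! t = Suc ((i # js) ! t)")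
    case True
    then show ?thesis using chain_path[of js "length js" k i] by simp
  next
    case False
    then obtain t where t: "t < Suc (length js)" "(js @ [k]) ! t \<noteq> Suc ((i # js) ! t)" by auto
    have "chain s W i js k ! t = (\<lambda>_ _. 0)"
      using nth_chain[OF t(1), of s W i k] BW t(2) by simp
    then have "(\<lambda>_ _. 0) \<in> set (chain s W i js k)"
      using nth_mem[of t "chain s W i js k"] t(1) length_chain by metis
    then show ?thesis by simp
  qed
  have mem: "(s * m, B) \<in> Nilp scM s Y"
  proof -
    have mok: "mat_ok (s * m) B"
      unfolding B_def mat_ok_def bidiag_def by auto
    have "odot_zero scM s m W m"
      unfolding odot_zero_def
    proof (intro allI impI)
      fix i k assume ik: "i < m" "k < m"
      have "delta (chain s W i js k) \<in> tz_span scM s" if "js \<in> seqs m (m - 1)" for js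
      proof -
        have ljs: "length js = m - 1" using that by (simp add: seqs_def)
        have "(\<lambda>_ _. 0) \<in> set (chain s W i js k)"
          using zp[of i js k] ljs ik unfolding m_def by auto
        then obtain xs ys where "chain s W i js k = xs @ (\<lambda>_ _. 0) # ys"
          by (meson split_list)
        moreover have "\<forall>x\<in>set (xs @ (\<lambda>_ _. 0) # ys). mat_ok s x"
          using chain_ok[of s W i js k] calculation by simp
        ultimately show ?thesis
          using tz_delta_zero[OF A(1), of xs s ys] by simp
      qed
      then have "(\<lambda>w. \<Sum>js\<in>seqs m (m - 1). delta (chain s W i js k) w) \<in> tz_span scM s"
        by (intro tz_sum_closed) auto
      moreover have "m \<noteq> 0" unfolding m_def by simp
      ultimately show "tpow_elem s m W m i k \<in> tz_span scM s"
        unfolding tpow_elem_def by simp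
    qed
    then show ?thesis unfolding Nilp_def W_def using mok m_def by auto
  qed
  have fok: "mat_ok (s * m) (f (s * m, B))"
    using A(5) mem unfolding nc_fun_def by blast
  have mokB: "mat_ok (s * m) B"
    using mem unfolding Nilp_def by auto
  have fB: "nc_ext scM scN (Nilp scM s Y) f (s * m) B = f (s * m, B)"
    unfolding nc_ext_def
  proof (rule the_equality)
    show "\<exists>S T X. (s * m, X) \<in> Nilp scM s Y \<and> inv_pair (s * m) S T \<and>
        B = rmul scM (s * m) (lmul scM (s * m) S X) T \<and>
        f (s * m, B) = rmul scN (s * m) (lmul scN (s * m) S (f (s * m, X))) T"
      using mem inv_ident ident_mul[OF A(1) mokB] ident_mul[OF A(2) fok] by metis
  next
    fix Wv assume "\<exists>S T X. (s * m, X) \<in> Nilp scM s Y \<and> inv_pair (s * m) S T \<and>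
        B = rmul scM (s * m) (lmul scM (s * m) S X) T \<and>
        Wv = rmul scN (s * m) (lmul scN (s * m) S (f (s * m, X))) T"
    then obtain S T X where "(s * m, X) \<in> Nilp scM s Y" "inv_pair (s * m) S T"
        "B = rmul scM (s * m) (lmul scM (s * m) S X) T"
        "Wv = rmul scN (s * m) (lmul scN (s * m) S (f (s * m, X))) T" by blast
    then show "Wv = f (s * m, B)"
      using A(5) mem unfolding nc_fun_def by metis
  qed
  have D: "DeltaR scM scN (Nilp scM s Y) f s (replicate (Suc l) Y) Zs = blk s (f (s * m, B)) 0 l"
    unfolding DeltaR_def using fB len by (simp add: m_def B_def)
  show "fl l Zs = DeltaR scM scN (Nilp scM s Y) f s (replicate (Suc l) Y) Zs"
    unfolding D
  proof (rule ext, rule ext)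
    fix a b
    show "fl l Zs a b = blk s (f (s * m, B)) 0 l a b"
    proof (cases "a < s \<and> b < s")
      case False
      have "mat_ok s (fl l Zs)" using A(6) len ok unfolding multilin_def by blast
      then show ?thesis using False by (auto simp: mat_ok_def blk_def)
    next
      case True
      define q where "q = l * s + b"
      have e: "blk s (f (s * m, B)) 0 l a b = f (s * m, B) a q"
        using True by (simp add: blk_def q_def)
      define Sset where "Sset = {L. odot_apply s m W L (fl L) \<noteq> (\<lambda>_ _. 0)}"
      have fin: "finite Sset" and fsum: "f (s * m, B) a q = (\<Sum>L\<in>Sset. odot_apply s m W L (fl L) a q)"
        using A(7)[rule_format, of m B] mem unfolding Sset_def W_def m_def by auto
      have aq: "a div s = 0" "a mod s = a" "a < s * m" "q div s = l" "q mod s = b" "q < s * m"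
        using True divmod_facts(1,2)[where a=a and s=s and i=0] divmod_facts(3)[where a=a and s=s and i=0 and m=m]
          divmod_facts(1,2)[where a=b and s=s and i=l] divmod_facts(3)[where a=b and s=s and i=l and m=m]
        unfolding q_def m_def by auto
      have trm: "fl L (chain s W 0 js l) a b = (if L = l \<and> js = [Suc 0..<l] then fl l Zs a b else 0)"
        if L1: "1 \<le> L" and js: "js \<in> seqs m (L - 1)" for L js
      proof -
        have ljs: "length js = L - 1" using js by (simp add: seqs_def)
        have SL: "Suc (length js) = L" using ljs L1 by simp
        define P where "P = (\<forall>t<L. (js @ [l]) ! t = Suc ((0 # js) ! t))"
        have P1: "P" if "L = l" "js = [Suc 0..<l]"
          unfolding P_def
        proof (intro allI impI)
          fix t assume t: "t < L"
          show "(js @ [l]) ! t = Suc ((0 # js) ! t)"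
          proof (cases "t < l - 1")
            case True
            then show ?thesis using that by (simp add: nth_append nth_Cons split: nat.split)
          next
            case False
            then have "t = l - 1" using t that by simp
            then show ?thesis using that L1 by (auto simp: nth_append nth_Cons split: nat.split)
          qed
        qed
        have P2: "L = l \<and> js = [Suc 0..<l] \<and> chain s W 0 js l = Zs" if "P"
        proof -
          have pth: "(\<forall>t<L. (0 # js) ! t = t) \<and> l = L"
            using chain_path[of js "length js" l 0] that SL unfolding P_def by simp
          then have Ll: "L = l" by simp
          have "js = [Suc 0..<l]"
          proof (rule nth_equalityI)
            show "length js = length [Suc 0..<l]" using ljs Ll by simp
            fix t assume "t < length js"
            then have "(0 # js) ! Suc t = Suc t" using pth SL by (metis Suc_mono)
            then show "js ! t = [Suc 0..<l] ! t" using \<open>t < length js\<close> ljs Ll by simp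
          qed
          moreover have "chain s W 0 js l = Zs"
          proof (rule nth_equalityI)
            show "length (chain s W 0 js l) = length Zs" using SL Ll len by (simp add: length_chain)
            fix t assume t: "t < length (chain s W 0 js l)"
            then have tL: "t < L" using SL by (simp add: length_chain)
            have "chain s W 0 js l ! t = blk s W t (Suc t)"
              using nth_chain[of t js s W 0 l] tL SL pth that unfolding P_def by simp
            also have "\<dots> = Zs ! t" using BW tL Ll unfolding m_def by simp
            finally show "chain s W 0 js l ! t = Zs ! t" .
          qed
          ultimately show ?thesis using Ll by simp
        qed
        show ?thesis
        proof (cases P)
          case True
          then have "L = l" "js = [Suc 0..<l]" "chain s W 0 js l = Zs" using P2 by auto
          then show ?thesis by simp
        next
          case False
          then have z: "(\<lambda>_ _. 0) \<in> set (chain s W 0 js l)"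
            using zp[of 0 js l] SL unfolding P_def by auto
          then obtain xs ys where ch: "chain s W 0 js l = xs @ (\<lambda>_ _. 0) # ys"
            by (meson split_list)
          have okc: "\<forall>x\<in>set (xs @ (\<lambda>_ _. 0) # ys). mat_ok s x"
            using chain_ok[of s W 0 js l] ch by simp
          have "fl L (chain s W 0 js l) = (\<lambda>_ _. 0)"
            using multilin_zero[OF A(1) A(2) A(6)[rule_format, of L], of xs ys] ch okc length_chain[of s W 0 js l] SL
            by simp
          then show ?thesis using False P1 by auto
        qed
      qed
      have fins: "finite (seqs m n)" for n
      proof -
        have "seqs m n \<subseteq> {xs. set xs \<subseteq> {..<m} \<and> length xs = n}" by (auto simp: seqs_def)
        then show ?thesis using finite_lists_length_eq[of "{..<m}" n] finite_subset by blast
      qed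
      have claim: "odot_apply s m W L (fl L) a q = (if L = l then fl l Zs a b else 0)" for L
      proof (cases "L = 0")
        case True
        then show ?thesis using aq len by (auto simp: odot_apply_def Let_def)
      next
        case False
        then have "odot_apply s m W L (fl L) a q = (\<Sum>js\<in>seqs m (L - 1). fl L (chain s W 0 js l) a b)"
          using aq by (simp add: odot_apply_def Let_def)
        also have "\<dots> = (\<Sum>js\<in>seqs m (L - 1). if L = l \<and> js = [Suc 0..<l] then fl l Zs a b else 0)"
          using trm False by (intro sum.cong) auto
        also have "\<dots> = (if L = l then fl l Zs a b else 0)"
        proof (cases "L = l")
          case True
          have "[Suc 0..<l] \<in> seqs m (L - 1)" using True by (auto simp: seqs_def m_def)
          then show ?thesis using True fins by (simp add: sum.delta)
        next
          case False
          then show ?thesis by simp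
        qed
        finally show ?thesis .
      qed
      have "(\<Sum>L\<in>Sset. odot_apply s m W L (fl L) a q) = fl l Zs a b"
      proof (cases "l \<in> Sset")
        case True
        then show ?thesis unfolding claim using fin by (simp add: sum.delta)
      next
        case False
        then have "odot_apply s m W l (fl l) = (\<lambda>_ _. 0)" unfolding Sset_def by simp
        then have "fl l Zs a b = 0" using claim[of l] by simp
        then show ?thesis unfolding claim using fin False by (simp add: sum.delta)
      qed
      then show ?thesis using e fsum by simp
    qed
  qed
qed

end
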